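(* Let $\boldsymbol{P}$ be a feasible policy (as defined in the context). Then every entry of $\boldsymbol{Y}_{\boldsymbol{P}}$ is non-negative.
   Context: $M\ge2$ worker nodes, undirected graph with neighborhood indicators $d_{i,m}\in\{0,1\}$. $\boldsymbol{P}=[p_{i,m}]_{M\times M}$ has rows that are probability distributions; $t_{i,m}>0$ are iteration times; $\alpha>0$, $\rho>0$. Define $\overline{t}_i=\sum_m t_{i,m}p_{i,m}d_{i,m}$, $p_i=\frac{1/\overline{t}_i}{\sum_m 1/\overline{t}_m}$, $\gamma_{i,m}=\frac{d_{i,m}+d_{m,i}}{2p_{i,m}}$ (terms with $p_{i,m}=0$ taken as $0$). $\boldsymbol{Y}_{\boldsymbol{P}}=[y_{i,m}]$ with $y_{i,i}=1-2\alpha\rho\sum_{m\ne i}p_ip_{i,m}\gamma_{i,m}+\alpha^2\rho^2\sum_{m\ne i}(p_ip_{i,m}\gamma_{i,m}^2+p_mp_{m,i}\gamma_{m,i}^2)$ and, for $m\ne i$, $y_{i,m}=\alpha\rho(p_ip_{i,m}\gamma_{i,m}+p_mp_{m,i}\gamma_{m,i})-\alpha^2\rho^2(p_ip_{i,m}\gamma_{i,m}^2+p_mp_{m,i}\gamma_{m,i}^2)$. $\boldsymbol{P}$ is feasible if: there is $\overline{t}$ with $\overline{t}=\frac1M\sum_m t_{i,m}p_{i,m}d_{i,m}$ for all $i$; $p_{i,m}>\alpha\rho(d_{i,m}+d_{m,i})$ for all $i\ne m$ with $d_{i,m}\ne0$; $p_{i,m}=0$ whenever $d_{i,m}=0$;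 and $\sum_m p_{i,m}=1$ for all $i$. *)

theory Defs
  imports Complex_Main
begin

text \<open>Workers are indexed by 0..<M. d, P, t are M x M arrays given as functions nat => nat => real.\<close>

definition tbar :: "nat \<Rightarrow> (nat \<Rightarrow> nat \<Rightarrow> real) \<Rightarrow> (nat \<Rightarrow> nat \<Rightarrow> real) \<Rightarrow> (nat \<Rightarrow> nat \<Rightarrow> real) \<Rightarrow> nat \<Rightarrow> real" where
  "tbar M d P t i = (\<Sum>m<M. t i m * P i m * d i m)"

definition pnode :: "nat \<Rightarrow> (nat \<Rightarrow> nat \<Rightarrow> real) \<Rightarrow> (nat \<Rightarrow> nat \<Rightarrow> real) \<Rightarrow> (nat \<Rightarrow> nat \<Rightarrow> real) \<Rightarrow> nat \<Rightarrow> real" where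
  "pnode M d P t i = (1 / tbar M d P t i) / (\<Sum>m<M. 1 / tbar M d P t m)"

definition gam :: "(nat \<Rightarrow> nat \<Rightarrow> real) \<Rightarrow> (nat \<Rightarrow> nat \<Rightarrow> real) \<Rightarrow> nat \<Rightarrow> nat \<Rightarrow> real" where
  "gam d P i m = (if P i m = 0 then 0 else (d i m + d m i) / (2 * P i m))"

definition Ymat :: "nat \<Rightarrow> (nat \<Rightarrow> nat \<Rightarrow> real) \<Rightarrow> (nat \<Rightarrow> nat \<Rightarrow> real) \<Rightarrow> (nat \<Rightarrow> nat \<Rightarrow> real)
    \<Rightarrow> real \<Rightarrow> real \<Rightarrow> nat \<Rightarrow> nat \<Rightarrow> real" where
  "Ymat M d P t \<alpha> \<rho> i m =
    (let p = pnode M d P t; g = gam d P in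
     if i = m then
       1 - 2 * \<alpha> * \<rho> * (\<Sum>k\<in>{..<M} - {i}. p i * P i k * g i k)
         + \<alpha>\<^sup>2 * \<rho>\<^sup>2 * (\<Sum>k\<in>{..<M} - {i}. p i * P i k * (g i k)\<^sup>2 + p k * P k i * (g k i)\<^sup>2)
     else
       \<alpha> * \<rho> * (p i * P i m * g i m + p m * P m i * g m i)
         - \<alpha>\<^sup>2 * \<rho>\<^sup>2 * (p i * P i m * (g i m)\<^sup>2 + p m * P m i * (g m i)\<^sup>2))"

definition feasible :: "nat \<Rightarrow> (nat \<Rightarrow> nat \<Rightarrow> real) \<Rightarrow> (nat \<Rightarrow> nat \<Rightarrow> real) \<Rightarrow> (nat \<Rightarrow> nat \<Rightarrow> real)
    \<Rightarrow> real \<Rightarrow> real \<Rightarrow> bool" where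
  "feasible M d P t \<alpha> \<rho> \<longleftrightarrow>
     (\<exists>tb. \<forall>i<M. tb = (1 / real M) * (\<Sum>m<M. t i m * P i m * d i m)) \<and>
     (\<forall>i<M. \<forall>m<M. i \<noteq> m \<and> d i m \<noteq> 0 \<longrightarrow> P i m > \<alpha> * \<rho> * (d i m + d m i)) \<and>
     (\<forall>i<M. \<forall>m<M. d i m = 0 \<longrightarrow> P i m = 0) \<and>
     (\<forall>i<M. (\<Sum>m<M. P i m) = 1)"

end

theory Submission
  imports Defs
begin

lemma p_bounds:
  assumes tb: "\<forall>m<M. tbar M d P t m \<ge> 0" and i: "i < M"
  shows "pnode M d P t i \<ge> 0 \<and> pnode M d P t i \<le> 1"
proof -
  let ?x = "\<lambda>m. 1 / tbar M d P t m"
  have xn: "\<forall>m<M. ?x m \<ge> 0" using tb by simp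
  have S0: "(\<Sum>m<M. ?x m) \<ge> ?x i"
    using xn i by (intro member_le_sum) auto
  have "?x i \<ge> 0" using xn i by simp
  moreover have "\<And>x S::real. 0 \<le> x \<Longrightarrow> x \<le> S \<Longrightarrow> 0 \<le> x / S \<and> x / S \<le> 1"
    by (auto simp: divide_le_eq_1)
  ultimately show ?thesis using S0 unfolding pnode_def by blast
qed

lemma key:
  assumes a: "\<alpha> > 0" "\<rho> > 0"
    and dik: "d i k = 0 \<or> d i k = 1" and sym: "d k i = d i k"
    and Pn: "P i k \<ge> 0"
    and f1: "d i k \<noteq> 0 \<Longrightarrow> P i k > \<alpha> * \<rho> * (d i k + d k i)"
    and f2: "d i k = 0 \<Longrightarrow> P i k = 0"
  shows "gam d P i k \<ge> 0 \<and> 2 * \<alpha> * \<rho> * (P i k * gam d P i k) \<le> P i k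
     \<and> \<alpha> * \<rho> * gam d P i k \<le> 1/2"
proof (cases "d i k = 0")
  case True then show ?thesis using f2 by (simp add: gam_def)
next
  case False
  then have d1: "d i k = 1" using dik by simp
  have Pg: "P i k > 2 * \<alpha> * \<rho>" using f1 False d1 sym by simp
  have pp: "P i k > 0" using Pg a by (smt (verit) mult_pos_pos)
  have g: "gam d P i k = 1 / P i k" using d1 sym pp by (simp add: gam_def)
  have "\<alpha> * \<rho> * (1 / P i k) \<le> 1/2" using Pg pp by (simp add: field_simps)
  then show ?thesis using g pp Pg by simp
qed

theorem lemma2:
  fixes M :: nat and d P t :: "nat \<Rightarrow> nat \<Rightarrow> real" and \<alpha> \<rho> :: real
  assumes "M \<ge> 2"
    and "\<forall>i<M. \<forall>m<M. d i m = 0 \<or> d i m = 1"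
    and "\<forall>i<M. \<forall>m<M. d i m = d m i"
    and "\<forall>i<M. \<forall>m<M. P i m \<ge> 0"
    and "\<forall>i<M. (\<Sum>m<M. P i m) = 1"
    and "\<forall>i<M. \<forall>m<M. t i m > 0"
    and "\<alpha> > 0" and "\<rho> > 0"
    and "feasible M d P t \<alpha> \<rho>"
  shows "\<forall>i<M. \<forall>m<M. Ymat M d P t \<alpha> \<rho> i m \<ge> 0"
proof (intro allI impI)
  fix i m assume i: "i < M" and m: "m < M"
  have dd: "\<And>i m. i < M \<Longrightarrow> m < M \<Longrightarrow> d i m \<ge> 0"
    using assms(2) by (metis order_refl zero_le_one)
  have tb: "\<forall>m<M. tbar M d P t m \<ge> 0"
    unfolding tbar_def
  proof (intro allI impI sum_nonneg)
    fix j k assume "j < M" "k \<in> {..<M}"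
    then show "0 \<le> t j k * P j k * d j k" using assms(4,6) dd
      by (metis lessThan_iff mult_nonneg_nonneg order.strict_implies_order)
  qed
  have pb: "\<And>j. j < M \<Longrightarrow> pnode M d P t j \<ge> 0 \<and> pnode M d P t j \<le> 1"
    using p_bounds[OF tb] by blast
  have K: "\<And>i k. i < M \<Longrightarrow> k < M \<Longrightarrow> i \<noteq> k \<Longrightarrow> gam d P i k \<ge> 0
      \<and> 2 * \<alpha> * \<rho> * (P i k * gam d P i k) \<le> P i k \<and> \<alpha> * \<rho> * gam d P i k \<le> 1/2"
  proof -
    fix i k assume ik: "i < M" "k < M" "i \<noteq> k"
    show "gam d P i k \<ge> 0
      \<and> 2 * \<alpha> * \<rho> * (P i k * gam d P i k) \<le> P i k \<and> \<alpha> * \<rho> * gam d P i k \<le> 1/2"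
      apply (rule key)
      using ik assms unfolding feasible_def by auto
  qed
  let ?p = "pnode M d P t" and ?g = "gam d P"
  have off: "\<alpha> * \<rho> * (?p a * P a b * ?g a b) - \<alpha>\<^sup>2 * \<rho>\<^sup>2 * (?p a * P a b * (?g a b)\<^sup>2) \<ge> 0"
    if ab: "a < M" "b < M" "a \<noteq> b" for a b
  proof -
    have k: "?g a b \<ge> 0" "\<alpha> * \<rho> * ?g a b \<le> 1/2" using K[OF ab] by auto
    have pa: "?p a * P a b \<ge> 0" using pb[OF ab(1)] assms(4) ab by simp
    have "\<alpha> * \<rho> * (?p a * P a b * ?g a b) - \<alpha>\<^sup>2 * \<rho>\<^sup>2 * (?p a * P a b * (?g a b)\<^sup>2)
       = (?p a * P a b) * ((\<alpha> * \<rho> * ?g a b) * (1 - \<alpha> * \<rho> * ?g a b))"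
      by (simp add: power2_eq_square algebra_simps)
    also have "\<dots> \<ge> 0"
    proof (rule mult_nonneg_nonneg[OF pa])
      have "\<alpha> * \<rho> * ?g a b \<ge> 0" using k(1) assms(7,8) by simp
      moreover have "1 - \<alpha> * \<rho> * ?g a b \<ge> 0" using k(2) by simp
      ultimately show "0 \<le> \<alpha> * \<rho> * ?g a b * (1 - \<alpha> * \<rho> * ?g a b)"
        by (rule mult_nonneg_nonneg)
    qed
    finally show ?thesis .
  qed
  show "Ymat M d P t \<alpha> \<rho> i m \<ge> 0"
  proof (cases "i = m")
    case False
    have "Ymat M d P t \<alpha> \<rho> i m =
       (\<alpha> * \<rho> * (?p i * P i m * ?g i m) - \<alpha>\<^sup>2 * \<rho>\<^sup>2 * (?p i * P i m * (?g i m)\<^sup>2))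
     + (\<alpha> * \<rho> * (?p m * P m i * ?g m i) - \<alpha>\<^sup>2 * \<rho>\<^sup>2 * (?p m * P m i * (?g m i)\<^sup>2))"
      using False unfolding Ymat_def Let_def by (simp add: algebra_simps)
    then show ?thesis using off[OF i m False] off[OF m i] False by simp
  next
    case True
    have S2: "(\<Sum>k\<in>{..<M} - {i}. ?p i * P i k * (?g i k)\<^sup>2 + ?p k * P k i * (?g k i)\<^sup>2) \<ge> 0"
      using pb assms(4) i by (intro sum_nonneg) auto
    have "2 * \<alpha> * \<rho> * (\<Sum>k\<in>{..<M} - {i}. ?p i * P i k * ?g i k)
        = ?p i * (\<Sum>k\<in>{..<M} - {i}. 2 * \<alpha> * \<rho> * (P i k * ?g i k))"
      by (simp add: sum_distrib_left algebra_simps)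
    also have "\<dots> \<le> ?p i * (\<Sum>k\<in>{..<M} - {i}. P i k)"
      using K i pb[OF i] by (intro mult_left_mono sum_mono) auto
    also have "\<dots> \<le> 1"
    proof -
      have "(\<Sum>k\<in>{..<M} - {i}. P i k) \<le> (\<Sum>k<M. P i k)"
        using assms(4) i by (intro sum_mono2) auto
      then have s1: "(\<Sum>k\<in>{..<M} - {i}. P i k) \<le> 1" using assms(5) i by simp
      have "?p i * (\<Sum>k\<in>{..<M} - {i}. P i k) \<le> ?p i * 1"
        using s1 pb[OF i] by (intro mult_left_mono) auto
      then show ?thesis using pb[OF i] by simp
    qed
    finally have "2 * \<alpha> * \<rho> * (\<Sum>k\<in>{..<M} - {i}. ?p i * P i k * ?g i k) \<le> 1" .
    moreover have "\<alpha>\<^sup>2 * \<rho>\<^sup>2 * (\<Sum>k\<in>{..<M} - {i}. ?p i * P i k * (?g i k)\<^sup>2 + ?p k * P k i * (?g k i)\<^sup>2) \<ge> 0"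
      using S2 by simp
    ultimately show ?thesis using True unfolding Ymat_def Let_def by simp
  qed
qed

end
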